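(* In the setting described in the context, suppose $K\in\mathbb{R}^{m\times n}$ and a symmetric $P\in\mathbb{R}^{n\times n}$ with $P>0$ satisfy $P-(A+BK)P(A+BK)^\top>0$ for all $(A,B)\in\Sigma$. Then $\operatorname{im}\begin{bmatrix} I\\ K\end{bmatrix}\subseteq\operatorname{im}\begin{bmatrix} X_-\\ U_-\end{bmatrix}$.
   Context: Consider the system $x(t+1)=A_sx(t)+B_su(t)+w(t)$ with unknown $A_s\in\mathbb{R}^{n\times n}$, $B_s\in\mathbb{R}^{n\times m}$ and unknown noise $w$. Data: $X_+=[x(1)\ \cdots\ x(T)]$, $X_-=[x(0)\ \cdots\ x(T-1)]$, $U_-=[u(0)\ \cdots\ u(T-1)]$, with $X_+=A_sX_-+B_sU_-+W_-$ where $W_-=[w(0)\ \cdots\ w(T-1)]$ satisfies $\begin{bmatrix} I\\ W_-^\top\end{bmatrix}^\top\begin{bmatrix}\Phi_{11} & \Phi_{12}\\ \Phi_{12}^\top & \Phi_{22}\end{bmatrix}\begin{bmatrix} I\\ W_-^\top\end{bmatrix}\ge0$ for known $\Phi_{11}=\Phi_{11}^\top\in\mathbb{R}^{n\times n}$, $\Phi_{12}\in\mathbb{R}^{n\times T}$, $\Phi_{22}=\Phi_{22}^\top\in\mathbb{R}^{T\times T}$, $\Phi_{22}<0$. $\Sigma$ is the set of all $(A,B)\in\mathbb{R}^{n\times n}\times\mathbb{R}^{n\times m}$ such that $X_+=AX_-+BU_-+W$ for some $W\in\mathbb{R}^{n\times T}$ satisfying the same noise inequality (so $(A_s,B_s)\in\Sigma$).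 *)

theory Defs
  imports "HOL-Analysis.Analysis"
begin

text \<open>Matrices are HOL-Analysis matrices: an r x c real matrix has type real^'c^'r.
  The state dimension n, input dimension m and number of samples T are the
  cardinalities of finite index types 'n, 'm, 't.\<close>

definition sym_mat :: "real^'n^'n \<Rightarrow> bool" where
  "sym_mat M \<longleftrightarrow> transpose M = M"

definition psd :: "real^'n^'n \<Rightarrow> bool" where
  "psd M \<longleftrightarrow> sym_mat M \<and> (\<forall>x. 0 \<le> x \<bullet> (M *v x))"

definition pd :: "real^'n^'n \<Rightarrow> bool" where
  "pd M \<longleftrightarrow> sym_mat M \<and> (\<forall>x. x \<noteq> 0 \<longrightarrow> 0 < x \<bullet> (M *v x))"

definition nd :: "real^'n^'n \<Rightarrow> bool" where
  "nd M \<longleftrightarrow> pd (- M)"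

text \<open>The quadratic matrix inequality
  [I; W^T]^T [Phi11 Phi12; Phi12^T Phi22] [I; W^T] \<ge> 0, expanded blockwise.\<close>
definition noise_ok ::
  "real^'n^'n \<Rightarrow> real^'t^'n \<Rightarrow> real^'t^'t \<Rightarrow> real^'t^'n \<Rightarrow> bool" where
  "noise_ok Phi11 Phi12 Phi22 W \<longleftrightarrow>
     psd (Phi11 + Phi12 ** transpose W + W ** transpose Phi12 + W ** Phi22 ** transpose W)"

definition Sigma_set ::
  "real^'n^'n \<Rightarrow> real^'t^'n \<Rightarrow> real^'t^'t \<Rightarrow> real^'t^'n \<Rightarrow> real^'t^'n \<Rightarrow> real^'t^'m
   \<Rightarrow> ((real^'n^'n) \<times> (real^'m^'n)) set" where
  "Sigma_set Phi11 Phi12 Phi22 Xp Xm Um =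
     {(A, B). \<exists>W. Xp = A ** Xm + B ** Um + W \<and> noise_ok Phi11 Phi12 Phi22 W}"

definition vstack :: "real^'c^'r \<Rightarrow> real^'c^'s \<Rightarrow> real^'c^('r + 's)" where
  "vstack M N = (\<chi> i j. case i of Inl a \<Rightarrow> M $ a $ j | Inr b \<Rightarrow> N $ b $ j)"

definition mat_im :: "real^'c^'r \<Rightarrow> (real^'r) set" where
  "mat_im M = range (\<lambda>v. M *v v)"

end

theory Submission
  imports Defs
begin

definition outer :: "real^'a \<Rightarrow> real^'b \<Rightarrow> real^'b^'a" where
  "outer a b = (\<chi> i j. a$i * b$j)"

lemma sum_UNIV_Plus: "sum g (UNIV :: ('a::finite + 'b::finite) set) = sum (\<lambda>a. g (Inl a)) UNIV + sum (\<lambda>b. g (Inr b)) UNIV"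
  using sum.Plus[of "UNIV::'a set" "UNIV::'b set" g] by (simp add: comp_def)

lemma outer_mult: "outer a b ** M = outer a (b v* M)"
  by (simp add: outer_def matrix_matrix_mult_def vector_matrix_mult_def vec_eq_iff sum_distrib_left mult.assoc)

lemma vm_outer: "y v* outer a b = (y \<bullet> a) *\<^sub>R b"
  by (simp add: outer_def vector_matrix_mult_def vec_eq_iff inner_vec_def sum_distrib_right mult.assoc)

lemma quad_form: "y \<bullet> ((M ** P ** transpose M) *v (y::real^'n)) = (y v* M) \<bullet> (P *v (y v* M))"
proof -
  have "(M ** P ** transpose M) *v y = M *v (P *v (transpose M *v y))"
    by (simp add: matrix_vector_mul_assoc[symmetric])
  then show ?thesis by (simp add: dot_lmul_matrix)
qed

lemma vm_lin: "(z::real^'n) v* (M0 + c *\<^sub>R Q) = z v* M0 + c *\<^sub>R (z v* Q)"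
  unfolding vector_matrix_mult_add_rdistrib vector_scaleR_matrix_ac ..

lemma combine: "As + c *\<^sub>R outer z x + (Bs + c *\<^sub>R outer z e) ** K = As + Bs ** K + c *\<^sub>R outer z (x + e v* K)"
  by (simp add: outer_def matrix_matrix_mult_def vector_matrix_mult_def vec_eq_iff sum.distrib sum_distrib_left algebra_simps)

lemma data_comb: "(As + c *\<^sub>R outer z x) ** Xm + (Bs + c *\<^sub>R outer z e) ** Um = As ** Xm + Bs ** Um + c *\<^sub>R outer z (x v* Xm + e v* Um)"
  by (simp add: outer_def matrix_matrix_mult_def vector_matrix_mult_def vec_eq_iff sum.distrib sum_distrib_left algebra_simps)

lemma sym_cross: "sym_mat P \<Longrightarrow> z \<bullet> (P *v q) = q \<bullet> (P *v (z::real^'n))"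
  by (metis dot_lmul_matrix inner_commute sym_mat_def transpose_matrix_vector)


lemma quad_big:
  fixes \<alpha> \<beta> \<gamma> \<delta> :: real assumes g: "\<gamma> > 0"
  shows "\<exists>c. \<alpha> + \<beta> * c + \<gamma> * c^2 \<ge> \<delta>"
proof -
  define S where "S = \<bar>\<alpha>\<bar> + \<bar>\<beta>\<bar> + \<bar>\<delta>\<bar>"
  define c where "c = 1 + S / \<gamma>"
  have S0: "S \<ge> 0" unfolding S_def by simp
  have c1: "c \<ge> 1" unfolding c_def using g S0 by simp
  have gc: "\<gamma> * c = \<gamma> + S" unfolding c_def using g by (simp add: field_simps)
  have h1: "c * (\<gamma> * c) \<ge> c * S" using gc g c1 by (intro mult_left_mono) auto
  have h2: "\<bar>\<alpha>\<bar> * 1 \<le> \<bar>\<alpha>\<bar> * c" using c1 by (intro mult_left_mono) auto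
  have h4: "\<bar>\<delta>\<bar> * 1 \<le> \<bar>\<delta>\<bar> * c" using c1 by (intro mult_left_mono) auto
  have h3: "- (\<beta> * c) \<le> \<bar>\<beta>\<bar> * c" using c1
    by (metis abs_ge_minus_self abs_mult abs_of_nonneg order_trans zero_le_one)
  have "c * S = \<bar>\<alpha>\<bar> * c + \<bar>\<beta>\<bar> * c + \<bar>\<delta>\<bar> * c" unfolding S_def by (simp add: algebra_simps)
  moreover have "\<gamma> * c^2 = c * (\<gamma> * c)" by (simp add: power2_eq_square)
  ultimately have "\<alpha> + \<beta> * c + \<gamma> * c^2 \<ge> \<delta>" using h1 h2 h3 h4 by linarith
  then show ?thesis by blast
qed

lemma not_pd:
  fixes P M0 :: "real^'n^'n" and z :: "real^'n"
  assumes Ppd: "pd P" and z: "z \<noteq> 0"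
  shows "\<exists>c. \<not> pd (P - (M0 + c *\<^sub>R outer z z) ** P ** transpose (M0 + c *\<^sub>R outer z z))"
proof -
  have Psym: "sym_mat P" using Ppd pd_def by blast
  define q where "q = z v* M0"
  define a where "a = z \<bullet> z"
  have a: "a > 0" using z a_def by simp
  have pz: "z \<bullet> (P *v z) > 0" using Ppd z pd_def by blast
  define \<alpha> where "\<alpha> = q \<bullet> (P *v q)"
  define \<beta> where "\<beta> = 2 * a * (z \<bullet> (P *v q))"
  define \<gamma> where "\<gamma> = a * a * (z \<bullet> (P *v z))"
  have g: "\<gamma> > 0" unfolding \<gamma>_def using a pz by simp
  obtain c where c: "\<alpha> + \<beta> * c + \<gamma> * c^2 \<ge> z \<bullet> (P *v z)" using quad_big[OF g] by blast
  define N where "N = M0 + c *\<^sub>R outer z z"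
  have r: "z v* N = q + (c * a) *\<^sub>R z"
    unfolding N_def vm_lin q_def a_def vm_outer by simp
  have cross: "z \<bullet> (P *v q) = q \<bullet> (P *v z)" using sym_cross[OF Psym] .
  have "(z v* N) \<bullet> (P *v (z v* N)) = \<alpha> + \<beta> * c + \<gamma> * c^2"
    unfolding r \<alpha>_def \<beta>_def \<gamma>_def
    by (simp add: matrix_vector_right_distrib matrix_vector_mult_scaleR inner_add_left inner_add_right cross
        algebra_simps power2_eq_square)
  then have "z \<bullet> ((P - N ** P ** transpose N) *v z) \<le> 0"
    using c by (simp add: matrix_vector_mult_diff_rdistrib inner_diff_right quad_form)
  then have "\<not> pd (P - N ** P ** transpose N)" using z unfolding pd_def by (meson not_le)
  then show ?thesis unfolding N_def by blast
qed


lemma outer_zero: "outer a (0::real^'b) = 0"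
  by (simp add: outer_def vec_eq_iff)

theorem mainTheorem12:
  fixes x :: "nat \<Rightarrow> real^'n" and u :: "nat \<Rightarrow> real^'m" and w :: "nat \<Rightarrow> real^'n"
    and idx :: "'t::finite \<Rightarrow> nat"
    and As :: "real^'n^'n" and Bs :: "real^'m^'n"
    and Phi11 :: "real^'n^'n" and Phi12 :: "real^'t^'n" and Phi22 :: "real^'t^'t"
    and Xp Xm :: "real^'t^'n" and Um :: "real^'t^'m" and Wm :: "real^'t^'n"
    and K :: "real^'n^'m" and P :: "real^'n^'n"
  assumes idx: "bij_betw idx UNIV {..<CARD('t)}"
    and sys: "\<And>k. k < CARD('t) \<Longrightarrow> x (Suc k) = As *v x k + Bs *v u k + w k"
    and Xp_def: "Xp = (\<chi> i j. x (Suc (idx j)) $ i)"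
    and Xm_def: "Xm = (\<chi> i j. x (idx j) $ i)"
    and Um_def: "Um = (\<chi> i j. u (idx j) $ i)"
    and Wm_def: "Wm = (\<chi> i j. w (idx j) $ i)"
    and Phi11_sym: "sym_mat Phi11"
    and Phi22_sym: "sym_mat Phi22"
    and Phi22_neg: "nd Phi22"
    and noise: "noise_ok Phi11 Phi12 Phi22 Wm"
    and P_sym: "sym_mat P"
    and P_pos: "pd P"
    and stab: "\<And>A B. (A, B) \<in> Sigma_set Phi11 Phi12 Phi22 Xp Xm Um \<Longrightarrow>
                 pd (P - (A + B ** K) ** P ** transpose (A + B ** K))"
  shows "mat_im (vstack (mat 1 :: real^'n^'n) K) \<subseteq> mat_im (vstack Xm Um)"
proof
  have idxlt: "\<And>j. idx j < CARD('t)" using idx bij_betw_apply by fastforce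
  have data: "Xp = As ** Xm + Bs ** Um + Wm"
  proof -
    have "Xp $ i $ j = (As ** Xm + Bs ** Um + Wm) $ i $ j" for i j
    proof -
      have "x (Suc (idx j)) $ i = (As *v x (idx j) + Bs *v u (idx j) + w (idx j)) $ i"
        using sys[OF idxlt[of j]] by simp
      then show ?thesis
        by (simp add: Xp_def Xm_def Um_def Wm_def matrix_matrix_mult_def matrix_vector_mult_def)
    qed
    then show ?thesis by (simp add: vec_eq_iff)
  qed
  fix z assume "z \<in> mat_im (vstack (mat 1 :: real^'n^'n) K)"
  then obtain v where zv: "z = vstack (mat 1 :: real^'n^'n) K *v v" by (auto simp: mat_im_def)
  define N where "N = vstack Xm Um"
  show "z \<in> mat_im (vstack Xm Um)"
  proof (rule ccontr)
    assume nz: "z \<notin> mat_im (vstack Xm Um)"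
    have sub: "subspace (mat_im N)" unfolding mat_im_def
      by (rule linear_subspace_image) auto
    have spS: "span (mat_im N) = mat_im N" using sub by simp
    have "span (mat_im N) \<subseteq> span (insert z (mat_im N))" by (rule span_mono) auto
    moreover have "z \<in> span (insert z (mat_im N))" by (rule span_base) simp
    moreover have "z \<notin> span (mat_im N)" using nz spS unfolding N_def by metis
    ultimately have "span (mat_im N) \<subset> span (insert z (mat_im N))"
      by blast
    then obtain y where y0: "y \<noteq> 0" and yT: "y \<in> span (insert z (mat_im N))"
      and yorth: "\<And>t. t \<in> span (mat_im N) \<Longrightarrow> orthogonal y t"
      using orthogonal_to_subspace_exists_gen by metis
    have orthN: "y \<bullet> (N *v t) = 0" for t
      using yorth[of "N *v t"] span_base[of "N *v t" "mat_im N"]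
      by (auto simp: orthogonal_def mat_im_def)
    have yz: "y \<bullet> z \<noteq> 0"
    proof
      assume yz0: "y \<bullet> z = 0"
      from yT obtain k where "y - k *\<^sub>R z \<in> span (mat_im N)"
        using span_breakdown_eq by blast
      then have "y \<bullet> (y - k *\<^sub>R z) = 0" using yorth orthogonal_def by blast
      then have "y \<bullet> y = 0" using yz0 by (simp add: inner_diff_right)
      then show False using y0 by simp
    qed
    have yN: "y v* N = 0"
    proof -
      have "(y v* N) \<bullet> (y v* N) = 0" by (simp add: dot_lmul_matrix orthN)
      then show ?thesis by simp
    qed
    define \<xi> :: "real^'n" where "\<xi> = (\<chi> i. y $ Inl i)"
    define \<eta> :: "real^'m" where "\<eta> = (\<chi> i. y $ Inr i)"
    have split: "y v* N = \<xi> v* Xm + \<eta> v* Um"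
      by (simp add: N_def vstack_def vector_matrix_mult_def vec_eq_iff sum_UNIV_Plus \<xi>_def \<eta>_def)
    have zsplit: "y \<bullet> z = \<xi> \<bullet> v + \<eta> \<bullet> (K *v v)"
      by (simp add: zv inner_vec_def sum_UNIV_Plus vstack_def matrix_vector_mult_def \<xi>_def \<eta>_def
          mat_def if_distrib if_distribR cong: if_cong)
    define \<zeta> where "\<zeta> = \<xi> + \<eta> v* K"
    have "y \<bullet> z = \<zeta> \<bullet> v" unfolding zsplit \<zeta>_def
      by (simp add: inner_add_left dot_lmul_matrix)
    then have \<zeta>0: "\<zeta> \<noteq> 0" using yz by auto
    obtain c where c: "\<not> pd (P - (As + Bs ** K + c *\<^sub>R outer \<zeta> \<zeta>) ** P **
        transpose (As + Bs ** K + c *\<^sub>R outer \<zeta> \<zeta>))"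
      using not_pd[OF P_pos \<zeta>0, of "As + Bs ** K"] by blast
    define A where "A = As + c *\<^sub>R outer \<zeta> \<xi>"
    define B where "B = Bs + c *\<^sub>R outer \<zeta> \<eta>"
    have "\<xi> v* Xm + \<eta> v* Um = 0" using yN split by simp
    then have "A ** Xm + B ** Um = As ** Xm + Bs ** Um"
      unfolding A_def B_def data_comb by (simp add: outer_zero)
    then have "(A, B) \<in> Sigma_set Phi11 Phi12 Phi22 Xp Xm Um"
      unfolding Sigma_set_def using data noise by auto
    from stab[OF this] have "pd (P - (A + B ** K) ** P ** transpose (A + B ** K))" .
    moreover have "A + B ** K = As + Bs ** K + c *\<^sub>R outer \<zeta> \<zeta>"
      unfolding A_def B_def combine \<zeta>_def ..
    ultimately show False using c by simp
  qed
qed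

end
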